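(* Let $L$ be a semilattice. Let $X_L=\{P\in\mathrm{Ind}(L)\mid \bigcap_{T\in\mathrm{Ind}(L),\,T\supsetneq P}T\supsetneq P\}$, and for $l\in L$ let $\mathrm{Supp}(l)=\{P\in X_L\mid l\notin P\}$, where $X_L$ carries the coarsest topology in which all $\mathrm{Supp}(l)$ are closed. Then $X_L$ with this map $\mathrm{Supp}$ is the universal support datum of $L$: for every support datum $Y$ of $L$ there exists a unique map of support data $X_L\to Y$.
   Context: A semilattice is a partially ordered set in which any two elements have a supremum; a map of semilattices preserves finite suprema. For a semilattice $L$, an ind-object is a non-empty subset $T\subset L$ closed under suprema of two elements and downward closed; $\mathrm{Ind}(L)$ is the set of ind-objects ordered by inclusion. Any semilattice map $f\colon L\to L'$ into a semilattice $L'$ in which every non-empty subset has a supremum extends uniquely to $\tilde f\colon \mathrm{Ind}(L)\to L'$ preserving arbitrary suprema. For a set $X$, $2^X$ is ordered by inclusion. A support datum of $L$ is a $T_0$ topological space $X$ with a semilattice map $\mathrm{Supp}\colon L\to 2^X$ such that (1) the induced map $\mathrm{Ind}(L)\to 2^X$ is injective, and (2) the topology of $X$ is the coarsest in which all $\mathrm{Supp}(l)$, $l\in L$, are closed. A map of support data $X\to Y$ is a continuous map $f$ with $\mathrm{Supp}_X(l)=f^{-1}(\mathrm{Supp}_Y(l))$ for all $l\in L$. *)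

theory Defs
  imports "HOL-Analysis.Analysis"
begin

text \<open>A semilattice L is modelled as a type of class semilattice_sup (a partial order
 in which any two elements have a supremum, written sup).\<close>

definition ind_object :: "'a::semilattice_sup set \<Rightarrow> bool" where
  "ind_object T \<longleftrightarrow> T \<noteq> {} \<and> (\<forall>a\<in>T. \<forall>b\<in>T. sup a b \<in> T) \<and> (\<forall>a\<in>T. \<forall>b. b \<le> a \<longrightarrow> b \<in> T)"

definition Ind :: "'a::semilattice_sup set set" where
  "Ind = {T. ind_object T}"

definition semilattice_map_pow :: "('a::semilattice_sup \<Rightarrow> 'b set) \<Rightarrow> bool" where
  "semilattice_map_pow S \<longleftrightarrow> (\<forall>a b. S (sup a b) = S a \<union> S b)"

text \<open>The unique extension Ind(L) -> 2^X preserving arbitrary suprema: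
  T is the supremum of the principal ideals of its elements, so it is sent to the union.\<close>
definition ind_ext :: "('a::semilattice_sup \<Rightarrow> 'b set) \<Rightarrow> 'a set \<Rightarrow> 'b set" where
  "ind_ext S T = (\<Union>l\<in>T. S l)"

definition coarsest_with_closed :: "'b topology \<Rightarrow> ('a \<Rightarrow> 'b set) \<Rightarrow> bool" where
  "coarsest_with_closed X S \<longleftrightarrow>
     (\<forall>l. closedin X (S l)) \<and>
     (\<forall>X'. topspace X' = topspace X \<and> (\<forall>l. closedin X' (S l)) \<longrightarrow> (\<forall>U. openin X U \<longrightarrow> openin X' U))"

definition support_datum :: "'b topology \<Rightarrow> ('a::semilattice_sup \<Rightarrow> 'b set) \<Rightarrow> bool" where
  "support_datum X S \<longleftrightarrow>
     t0_space X \<and> semilattice_map_pow S \<and> (\<forall>l. S l \<subseteq> topspace X) \<and>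
     inj_on (ind_ext S) Ind \<and> coarsest_with_closed X S"

definition support_map ::
  "'b topology \<Rightarrow> ('a::semilattice_sup \<Rightarrow> 'b set) \<Rightarrow> 'c topology \<Rightarrow> ('a \<Rightarrow> 'c set) \<Rightarrow> ('b \<Rightarrow> 'c) \<Rightarrow> bool" where
  "support_map X SX Y SY f \<longleftrightarrow>
     continuous_map X Y f \<and> (\<forall>l. SX l = {x \<in> topspace X. f x \<in> SY l})"

definition XL :: "'a::semilattice_sup set set" where
  "XL = {P \<in> Ind. P \<subset> \<Inter>{T \<in> Ind. P \<subset> T}}"

definition SuppL :: "'a::semilattice_sup \<Rightarrow> 'a set set" where
  "SuppL l = {P \<in> XL. l \<notin> P}"

text \<open>Topology generated by the complements of the SuppL l (and XL itself as the whole space):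
  the coarsest topology on XL in which all SuppL l are closed.\<close>
definition XL_top :: "'a::semilattice_sup set topology" where
  "XL_top = topology_generated_by (insert XL {XL - SuppL l | l. True})"

end

theory Submission
  imports Defs
begin

lemma gen_preimage:
  assumes "generate_topology_on B U"
    and "\<And>b. b \<in> B \<Longrightarrow> openin X {x\<in>topspace X. f x \<in> b}"
  shows "openin X {x\<in>topspace X. f x \<in> U}"
  using assms(1)
proof (induction rule: generate_topology_on.induct)
  case Empty
  then show ?case by simp
next
  case (Int a b)
  have "{x\<in>topspace X. f x \<in> a \<inter> b} = {x\<in>topspace X. f x \<in> a} \<inter> {x\<in>topspace X. f x \<in> b}" by auto
  then show ?case using Int by auto
next
  case (UN K)
  have "{x\<in>topspace X. f x \<in> \<Union>K} = \<Union>((\<lambda>k. {x\<in>topspace X. f x \<in> k}) ` K)" by auto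
  then show ?case using UN by (auto intro!: openin_Union)
next
  case (Basis s)
  then show ?case using assms(2) by blast
qed

lemma gen_same:
  assumes "generate_topology_on B U"
    and "\<And>b. b \<in> B \<Longrightarrow> (y \<in> b \<longleftrightarrow> y' \<in> b)"
  shows "y \<in> U \<longleftrightarrow> y' \<in> U"
  using assms(1)
proof (induction rule: generate_topology_on.induct)
  case (UN K)
  then show ?case by blast
qed (use assms(2) in auto)

definition genY :: "'b topology \<Rightarrow> ('a \<Rightarrow> 'b set) \<Rightarrow> 'b topology" where
  "genY Y S = topology_generated_by (insert (topspace Y) {topspace Y - S l | l. True})"

lemma genY_props:
  assumes "support_datum Y S"
  shows "topspace (genY Y S) = topspace Y" "\<And>l. closedin (genY Y S) (S l)"
    "\<And>U. openin Y U \<Longrightarrow> generate_topology_on (insert (topspace Y) {topspace Y - S l | l. True}) U"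
proof -
  show ts: "topspace (genY Y S) = topspace Y" unfolding genY_def by auto
  show cl: "closedin (genY Y S) (S l)" for l
    unfolding closedin_def ts using assms
    by (auto simp: support_datum_def genY_def intro!: topology_generated_by_Basis)
  fix U assume "openin Y U"
  then have "openin (genY Y S) U"
    using assms ts cl unfolding support_datum_def coarsest_with_closed_def by blast
  then show "generate_topology_on (insert (topspace Y) {topspace Y - S l | l. True}) U"
    unfolding genY_def by (simp add: openin_topology_generated_by_iff)
qed

lemma sep:
  assumes "support_datum Y S" "y \<in> topspace Y" "y' \<in> topspace Y"
    "\<And>l. y \<in> S l \<longleftrightarrow> y' \<in> S l"
  shows "y = y'"
proof (rule ccontr)
  assume "y \<noteq> y'"
  then obtain U where U: "openin Y U" "y \<notin> U \<longleftrightarrow> y' \<in> U"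
    using assms unfolding support_datum_def t0_space_def by blast
  have "y \<in> U \<longleftrightarrow> y' \<in> U"
    by (rule gen_same[OF genY_props(3)[OF assms(1) U(1)]]) (use assms in auto)
  then show False using U by blast
qed

lemma map_mono:
  assumes "semilattice_map_pow S" "(b::'a::semilattice_sup) \<le> a"
  shows "S b \<subseteq> S a"
proof -
  have "sup a b = a" using assms(2) by (simp add: sup_absorb1)
  then have "S a = S a \<union> S b" using assms(1) unfolding semilattice_map_pow_def by metis
  then show ?thesis by blast
qed

lemma IY_ideal:
  assumes "semilattice_map_pow S" "a \<in> {l. y \<notin> S l}"
  shows "ind_object {l. y \<notin> S l}"
  unfolding ind_object_def
proof (intro conjI ballI allI impI)
  show "{l. y \<notin> S l} \<noteq> {}" using assms(2) by blast
  fix a b assume "a \<in> {l. y \<notin> S l}" "b \<in> {l. y \<notin> S l}"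
  then show "sup a b \<in> {l. y \<notin> S l}" using assms(1) by (simp add: semilattice_map_pow_def)
next
  fix a b assume "a \<in> {l. y \<notin> S l}" "b \<le> a"
  then show "b \<in> {l. y \<notin> S l}" using map_mono[OF assms(1)] by blast
qed

lemma ideal_sup_iff:
  assumes "ind_object P"
  shows "sup a b \<in> P \<longleftrightarrow> a \<in> P \<and> b \<in> P"
  using assms unfolding ind_object_def by (meson sup_ge1 sup_ge2)

lemma exists_point:
  assumes "support_datum Y S" "P \<in> XL"
  shows "\<exists>y\<in>topspace Y. \<forall>l. y \<in> S l \<longleftrightarrow> l \<notin> P"
proof -
  define Q where "Q = \<Inter>{T \<in> Ind. P \<subset> T}"
  have PQ: "P \<subset> Q" "P \<in> Ind" using assms(2) unfolding XL_def Q_def by auto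
  have Qi: "ind_object Q"
  proof -
    have "Q \<noteq> {}" using PQ by blast
    moreover have "\<forall>a\<in>Q. \<forall>b\<in>Q. sup a b \<in> Q"
    proof (intro ballI)
      fix a b assume "a \<in> Q" "b \<in> Q"
      show "sup a b \<in> Q" unfolding Q_def
      proof
        fix T assume T: "T \<in> {T \<in> Ind. P \<subset> T}"
        then have "a \<in> T" "b \<in> T" using \<open>a \<in> Q\<close> \<open>b \<in> Q\<close> unfolding Q_def by blast+
        then show "sup a b \<in> T" using T unfolding Ind_def ind_object_def by blast
      qed
    qed
    moreover have "\<forall>a\<in>Q. \<forall>b. b \<le> a \<longrightarrow> b \<in> Q"
    proof (intro ballI allI impI)
      fix a b assume "a \<in> Q" "b \<le> a"
      show "b \<in> Q" unfolding Q_def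
      proof
        fix T assume T: "T \<in> {T \<in> Ind. P \<subset> T}"
        then have "a \<in> T" using \<open>a \<in> Q\<close> unfolding Q_def by blast
        then show "b \<in> T" using T \<open>b \<le> a\<close> unfolding Ind_def ind_object_def by blast
      qed
    qed
    ultimately show ?thesis unfolding ind_object_def by blast
  qed
  have inj: "inj_on (ind_ext S) Ind" using assms(1) unfolding support_datum_def by blast
  have "ind_ext S P \<noteq> ind_ext S Q"
    using inj PQ Qi unfolding inj_on_def Ind_def by blast
  moreover have "ind_ext S P \<subseteq> ind_ext S Q" using PQ unfolding ind_ext_def by blast
  ultimately obtain y where y: "y \<in> ind_ext S Q" "y \<notin> ind_ext S P" by blast
  then obtain l0 where l0: "l0 \<in> Q" "y \<in> S l0" unfolding ind_ext_def by blast
  have ty: "y \<in> topspace Y" using l0 assms(1) unfolding support_datum_def by blast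
  define I where "I = {l. y \<notin> S l}"
  have PI: "P \<subseteq> I" using y(2) unfolding I_def ind_ext_def by blast
  have Pne: "P \<noteq> {}" using PQ unfolding Ind_def ind_object_def by auto
  then obtain a where "a \<in> P" by blast
  have Ii: "ind_object I" unfolding I_def
    by (rule IY_ideal) (use assms(1) PI \<open>a \<in> P\<close> I_def in \<open>auto simp: support_datum_def\<close>)
  have "I = P"
  proof (rule ccontr)
    assume "I \<noteq> P"
    then have "P \<subset> I" using PI by blast
    then have "Q \<subseteq> I" using Ii unfolding Q_def Ind_def by blast
    then show False using l0 unfolding I_def by blast
  qed
  then show ?thesis using ty unfolding I_def by blast
qed

lemma zorn_part:
  assumes "T2 \<in> Ind" "(l::'a::semilattice_sup) \<notin> T2"
  shows "\<exists>P\<in>XL. T2 \<subseteq> P \<and> l \<notin> P"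
proof -
  define A where "A = {T \<in> Ind. T2 \<subseteq> T \<and> l \<notin> T}"
  have "\<exists>M\<in>A. \<forall>X\<in>A. M \<subseteq> X \<longrightarrow> X = M"
  proof (rule subset_Zorn_nonempty)
    show "A \<noteq> {}" using assms unfolding A_def by blast
    fix C assume C: "C \<noteq> {}" "subset.chain A C"
    then have CA: "C \<subseteq> A" and ch: "\<forall>X\<in>C. \<forall>Y\<in>C. X \<subseteq> Y \<or> Y \<subseteq> X"
      by (auto simp: subset_chain_def)
    have "ind_object (\<Union>C)"
      unfolding ind_object_def
    proof (intro conjI ballI allI impI)
      obtain X where X: "X \<in> C" using C by blast
      then have "X \<noteq> {}" using CA unfolding A_def Ind_def ind_object_def by blast
      then show "\<Union>C \<noteq> {}" using X by blast
    next
      fix a b assume "a \<in> \<Union>C" "b \<in> \<Union>C"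
      then obtain X Z where XZ: "X \<in> C" "Z \<in> C" "a \<in> X" "b \<in> Z" by blast
      then have "X \<subseteq> Z \<or> Z \<subseteq> X" using ch by blast
      then obtain W where W: "W \<in> C" "a \<in> W" "b \<in> W" using XZ by blast
      then have "ind_object W" using CA unfolding A_def Ind_def by blast
      then have "sup a b \<in> W" using W unfolding ind_object_def by blast
      then show "sup a b \<in> \<Union>C" using W by blast
    next
      fix a b assume "a \<in> \<Union>C" "b \<le> a"
      then obtain W where W: "W \<in> C" "a \<in> W" by blast
      then have "ind_object W" using CA unfolding A_def Ind_def by blast
      then have "b \<in> W" using W \<open>b \<le> a\<close> unfolding ind_object_def by blast
      then show "b \<in> \<Union>C" using W by blast
    qed
    then show "\<Union>C \<in> A" using C CA unfolding A_def Ind_def by blast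
  qed
  then obtain P where P: "P \<in> A" "\<And>X. X \<in> A \<Longrightarrow> P \<subseteq> X \<Longrightarrow> X = P" by blast
  have "l \<in> \<Inter>{T \<in> Ind. P \<subset> T}"
  proof
    fix T assume T: "T \<in> {T \<in> Ind. P \<subset> T}"
    show "l \<in> T"
    proof (rule ccontr)
      assume "l \<notin> T"
      then have "T \<in> A" using T P(1) unfolding A_def by blast
      then show False using P(2) T by blast
    qed
  qed
  moreover have "P \<subseteq> \<Inter>{T \<in> Ind. P \<subset> T}" by blast
  ultimately have "P \<in> XL" using P(1) unfolding XL_def A_def by blast
  then show ?thesis using P(1) unfolding A_def by blast
qed

theorem mainTheorem2:
  shows "support_datum (XL_top :: 'a::semilattice_sup set topology) SuppL \<and>
    (\<forall>(Y :: 'b topology) (S :: 'a \<Rightarrow> 'b set). support_datum Y S \<longrightarrow>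
       (\<exists>f. support_map XL_top SuppL Y S f \<and>
          (\<forall>g. support_map XL_top SuppL Y S g \<longrightarrow> (\<forall>P\<in>topspace XL_top. g P = f P))))"
proof
  have ts: "topspace (XL_top :: 'a set topology) = XL"
    unfolding XL_top_def SuppL_def by auto
  have opn: "openin (XL_top :: 'a set topology) (XL - SuppL l)" for l
    unfolding XL_top_def by (rule topology_generated_by_Basis) blast
  have cl: "closedin (XL_top :: 'a set topology) (SuppL l)" for l
    unfolding closedin_def ts using opn by (auto simp: SuppL_def)
  show "support_datum (XL_top :: 'a::semilattice_sup set topology) SuppL"
    unfolding support_datum_def
  proof (intro conjI)
    show "t0_space (XL_top :: 'a set topology)"
      unfolding t0_space_def ts
    proof (intro ballI impI)
      fix P Q :: "'a set" assume PQ: "P \<in> XL" "Q \<in> XL" "P \<noteq> Q"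
      then obtain l where "(l \<in> P \<and> l \<notin> Q) \<or> (l \<in> Q \<and> l \<notin> P)" by blast
      moreover have "XL - SuppL l = {R \<in> XL. l \<in> R}" unfolding SuppL_def by blast
      ultimately have "(P \<notin> XL - SuppL l) = (Q \<in> XL - SuppL l)" using PQ by auto
      then show "\<exists>U. openin XL_top U \<and> (P \<notin> U) = (Q \<in> U)"
        using opn[of l] by blast
    qed
    show "semilattice_map_pow (SuppL :: 'a \<Rightarrow> _)"
      unfolding semilattice_map_pow_def
    proof (intro allI)
      fix a b :: 'a
      have io: "ind_object P" if "P \<in> XL" for P using that unfolding XL_def Ind_def by blast
      show "SuppL (sup a b) = SuppL a \<union> SuppL b"
        unfolding SuppL_def using io ideal_sup_iff by auto
    qed
    show "\<forall>l::'a. SuppL l \<subseteq> topspace XL_top" using ts unfolding SuppL_def by auto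
    show "inj_on (ind_ext (SuppL :: 'a \<Rightarrow> _)) Ind"
    proof (rule inj_onI, rule ccontr)
      have key: "False" if H: "T1 \<in> Ind" "T2 \<in> Ind" "ind_ext SuppL T1 = ind_ext SuppL T2"
        "l \<in> T1" "l \<notin> T2" for T1 T2 and l :: 'a
      proof -
        obtain P where P: "P \<in> XL" "T2 \<subseteq> P" "l \<notin> P" using zorn_part H by blast
        then have "P \<in> ind_ext SuppL T1" using H unfolding ind_ext_def SuppL_def by blast
        moreover have "P \<notin> ind_ext SuppL T2" using P unfolding ind_ext_def SuppL_def by blast
        ultimately show False using H by simp
      qed
      fix T1 T2 :: "'a set" assume "T1 \<in> Ind" "T2 \<in> Ind" "ind_ext SuppL T1 = ind_ext SuppL T2" "T1 \<noteq> T2"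
      then show False using key[of T1 T2] key[of T2 T1] by blast
    qed
    show "coarsest_with_closed (XL_top :: 'a set topology) SuppL"
      unfolding coarsest_with_closed_def
    proof (intro conjI allI impI)
      show "closedin XL_top (SuppL l)" for l :: 'a by (rule cl)
      fix X' :: "'a set topology" and U :: "'a set set"
      assume X': "topspace X' = topspace XL_top \<and> (\<forall>l. closedin X' (SuppL l))" and U: "openin XL_top U"
      have "generate_topology_on (insert XL {XL - SuppL l | l. True}) U"
        using U unfolding XL_top_def by (simp add: openin_topology_generated_by_iff)
      then have "openin X' {x\<in>topspace X'. id x \<in> U}"
      proof (rule gen_preimage)
        fix b :: "'a set set" assume "b \<in> insert XL {XL - SuppL l | l. True}"
        then consider "b = XL" | l where "b = XL - SuppL l" by blast
        then show "openin X' {x \<in> topspace X'. id x \<in> b}"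
        proof cases
          case 1
          then have "{x \<in> topspace X'. id x \<in> b} = topspace X'" using X' ts by auto
          then show ?thesis by simp
        next
          case (2 l)
          then have "{x \<in> topspace X'. id x \<in> b} = topspace X' - SuppL l" using X' ts by auto
          moreover have "closedin X' (SuppL l)" using X' by blast
          ultimately show ?thesis by (simp add: closedin_def)
        qed
      qed
      moreover have "U \<subseteq> topspace X'" using openin_subset[OF U] X' by simp
      then have "{x \<in> topspace X'. id x \<in> U} = U" by auto
      ultimately show "openin X' U" by simp
    qed
  qed
  show "\<forall>(Y :: 'b topology) (S :: 'a \<Rightarrow> 'b set). support_datum Y S \<longrightarrow>
       (\<exists>f. support_map XL_top SuppL Y S f \<and>
          (\<forall>g. support_map XL_top SuppL Y S g \<longrightarrow> (\<forall>P\<in>topspace XL_top. g P = f P)))"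
  proof (intro allI impI)
    fix Y :: "'b topology" and S :: "'a \<Rightarrow> 'b set"
    assume sd: "support_datum Y S"
    define f where "f P = (SOME y. y \<in> topspace Y \<and> (\<forall>l. y \<in> S l \<longleftrightarrow> l \<notin> P))" for P :: "'a set"
    have fP: "f P \<in> topspace Y \<and> (\<forall>l. f P \<in> S l \<longleftrightarrow> l \<notin> P)" if "P \<in> XL" for P
      unfolding f_def by (rule someI_ex) (use exists_point[OF sd that] in blast)
    have eqs: "SuppL l = {x \<in> topspace XL_top. f x \<in> S l}" for l
      using fP ts unfolding SuppL_def by auto
    have cont: "continuous_map XL_top Y f"
      unfolding continuous_map_def
    proof (intro conjI allI impI)
      show "f \<in> topspace XL_top \<rightarrow> topspace Y" using fP ts by auto
      fix U assume "openin Y U"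
      from genY_props(3)[OF sd this]
      show "openin XL_top {x \<in> topspace XL_top. f x \<in> U}"
      proof (rule gen_preimage)
        fix b assume b: "b \<in> insert (topspace Y) {topspace Y - S l | l. True}"
        show "openin XL_top {x \<in> topspace XL_top. f x \<in> b}"
        proof (cases "b = topspace Y")
          case True
          then have "{x \<in> topspace XL_top. f x \<in> b} = topspace XL_top" using fP ts by auto
          then show ?thesis by simp
        next
          case False
          then obtain l where "b = topspace Y - S l" using b by blast
          then have "{x \<in> topspace XL_top. f x \<in> b} = XL - SuppL l"
            using fP ts unfolding SuppL_def by auto
          then show ?thesis using opn by simp
        qed
      qed
    qed
    show "\<exists>f. support_map XL_top SuppL Y S f \<and>
          (\<forall>g. support_map XL_top SuppL Y S g \<longrightarrow> (\<forall>P\<in>topspace XL_top. g P = f P))"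
    proof (intro exI conjI allI impI ballI)
      show "support_map XL_top SuppL Y S f" unfolding support_map_def using cont eqs by blast
      fix g and P :: "'a set" assume g: "support_map XL_top SuppL Y S g" and P: "P \<in> topspace XL_top"
      have gt: "g P \<in> topspace Y" using g P unfolding support_map_def continuous_map_def by auto
      have gs: "g P \<in> S l \<longleftrightarrow> l \<notin> P" for l
      proof -
        have "SuppL l = {x \<in> topspace XL_top. g x \<in> S l}" using g unfolding support_map_def by blast
        then show ?thesis using P ts unfolding SuppL_def by auto
      qed
      show "g P = f P"
        by (rule sep[OF sd gt]) (use fP P ts gs in auto)
    qed
  qed
qed

end
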